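(* Let $X\subseteq U$ with $|X|=m$ and let $q\in U\setminus X$. Suppose $X$ is represented by a Bloom filter using $k$ independent simple tabulation hash functions $h_0,\dots,h_{k-1}:U\to[n]$: there are $k$ bit arrays $A_0,\dots,A_{k-1}$ of $n$ bits each, initially $0$; for each $x\in X$ and $i\in[k]$ bit $h_i(x)$ of $A_i$ is set to $1$; the query "is $q\in X$" answers yes iff bit $h_i(q)$ of $A_i$ equals $1$ for all $i\in[k]$. Then the probability of a false positive when querying $q$ (i.e., answering yes) is at most $$\left(p_0+\frac{2m^{2-1/c}}{n^2}\right)^k.$$
   Context: Simple tabulation hashing: the key universe is $U=[u]$, each key $x\in U$ is viewed as a vector $(x[0],\dots,x[c-1])$ of $c=O(1)$ characters from $\Sigma=[u^{1/c}]$; the range is $[n]=[2^r]$. A simple tabulation hash function is $h(x)=g_0(x[0])\oplus\cdots\oplus g_{c-1}(x[c-1])$ with $g_0,\dots,g_{c-1}:\Sigma\to[2^r]$ independent fully random functions and $\oplus$ bitwise XOR. $p_0=1-(1-1/n)^m$. *)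

theory Defs
  imports "HOL-Probability.Probability"
begin

text \<open>Keys of U = [sigma^c] are vectors of c characters from Sigma = [sigma],
  represented as extensional functions on {..<c}.\<close>
definition keys :: "nat \<Rightarrow> nat \<Rightarrow> (nat \<Rightarrow> nat) set" where
  "keys c \<sigma> = PiE {..<c} (\<lambda>_. {..<\<sigma>})"

definition tab_tables :: "nat \<Rightarrow> nat \<Rightarrow> nat \<Rightarrow> (nat \<Rightarrow> nat \<Rightarrow> nat) set" where
  "tab_tables c \<sigma> r = PiE {..<c} (\<lambda>_. PiE {..<\<sigma>} (\<lambda>_. {..<2^r}))"

definition tab_hash :: "nat \<Rightarrow> (nat \<Rightarrow> nat \<Rightarrow> nat) \<Rightarrow> (nat \<Rightarrow> nat) \<Rightarrow> nat" where
  "tab_hash c g x = foldr (\<lambda>j acc. Bit_Operations.xor (g j (x j)) acc) [0..<c] 0"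

definition tab_family :: "nat \<Rightarrow> nat \<Rightarrow> nat \<Rightarrow> nat \<Rightarrow> (nat \<Rightarrow> nat \<Rightarrow> nat \<Rightarrow> nat) pmf" where
  "tab_family k c \<sigma> r = pmf_of_set (PiE {..<k} (\<lambda>_. tab_tables c \<sigma> r))"

definition bloom_array :: "nat \<Rightarrow> (nat \<Rightarrow> nat \<Rightarrow> nat \<Rightarrow> nat) \<Rightarrow> (nat \<Rightarrow> nat) set \<Rightarrow> nat \<Rightarrow> nat \<Rightarrow> bool" where
  "bloom_array c G X i b = (\<exists>x\<in>X. tab_hash c (G i) x = b)"

definition bloom_query :: "nat \<Rightarrow> nat \<Rightarrow> (nat \<Rightarrow> nat \<Rightarrow> nat \<Rightarrow> nat) \<Rightarrow> (nat \<Rightarrow> nat) set \<Rightarrow> (nat \<Rightarrow> nat) \<Rightarrow> bool" where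
  "bloom_query k c G X q = (\<forall>i<k. bloom_array c G X i (tab_hash c (G i) q))"

end

theory Submission
  imports Defs
begin

lemma foldr_xor_acc:
  "foldr (\<lambda>j acc. xor (G j (x j)) acc) xs (a::nat) = xor (foldr (\<lambda>j acc. xor (G j (x j)) acc) xs 0) a"
  by (induction xs) (simp_all add: xor.assoc)

lemma tab_hash_0[simp]: "tab_hash 0 G x = 0"
  by (simp add: tab_hash_def)

lemma tab_hash_Suc: "tab_hash (Suc c) G x = xor (tab_hash c G x) (G c (x c))"
  unfolding tab_hash_def by (simp, rule foldr_xor_acc)

lemma tab_hash_cong:
  "(\<And>j. j < c \<Longrightarrow> G j (x j) = G' j (x j)) \<Longrightarrow> tab_hash c G x = tab_hash c G' x"
  by (induction c) (simp_all add: tab_hash_Suc)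

lemma tab_hash_diff:
  assumes "\<And>j'. j' < c \<Longrightarrow> j' \<noteq> j \<Longrightarrow> G1 j' (x j') = G2 j' (x j')"
  shows "xor (tab_hash c G1 x) (tab_hash c G2 x) = (if j < c then xor (G1 j (x j)) (G2 j (x j)) else 0)"
  using assms
proof (induction c)
  case 0
  then show ?case by simp
next
  case (Suc c)
  have IH: "xor (tab_hash c G1 x) (tab_hash c G2 x) = (if j < c then xor (G1 j (x j)) (G2 j (x j)) else 0)"
    using Suc by auto
  have e: "xor (tab_hash (Suc c) G1 x) (tab_hash (Suc c) G2 x)
     = xor (xor (tab_hash c G1 x) (tab_hash c G2 x)) (xor (G1 c (x c)) (G2 c (x c)))"
    by (simp add: tab_hash_Suc xor.assoc xor.left_commute)
  show ?case
  proof (cases "c = j")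
    case True
    then show ?thesis using IH e by simp
  next
    case False
    then have "G1 c (x c) = G2 c (x c)" using Suc.prems by simp
    then show ?thesis using IH e False by auto
  qed
qed

lemma xor_eq0: "xor (a::nat) b = 0 \<Longrightarrow> a = b"
  by (metis xor.assoc xor.right_neutral xor_self_eq)

lemma filter_image: "{x \<in> f ` M. Q x} = f ` {m \<in> M. Q (f m)}"
  by blast

lemma card_filter_prod:
  assumes "finite A" "finite B"
  shows "card {p \<in> A \<times> B. Q (fst p) (snd p)} = (\<Sum>b\<in>B. card {a \<in> A. Q a b})"
proof -
  have "{p \<in> A \<times> B. Q (fst p) (snd p)} = prod.swap ` Sigma B (\<lambda>b. {a \<in> A. Q a b})"
    by force
  then have "card {p \<in> A \<times> B. Q (fst p) (snd p)} = card (Sigma B (\<lambda>b. {a \<in> A. Q a b}))"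
    by (simp add: card_image)
  also have "\<dots> = (\<Sum>b\<in>B. card {a \<in> A. Q a b})"
    using assms by (simp add: card_SigmaI)
  finally show ?thesis .
qed

lemma card_PiE_insert_filter:
  assumes "finite S" "a \<notin> S" "\<And>i. finite (T i)"
  shows "card {g \<in> PiE (insert a S) T. P g} = (\<Sum>g\<in>PiE S T. card {y \<in> T a. P (g(a := y))})"
proof -
  let ?F = "\<lambda>(y, g). g(a := y)"
  have "{g \<in> PiE (insert a S) T. P g} = ?F ` {p \<in> T a \<times> PiE S T. P (?F p)}"
    unfolding PiE_insert_eq by (rule filter_image)
  moreover have "inj_on ?F {p \<in> T a \<times> PiE S T. P (?F p)}"
    by (rule inj_on_subset[OF inj_combinator[OF assms(2), of T]]) blast
  ultimately have "card {g \<in> PiE (insert a S) T. P g} = card {p \<in> T a \<times> PiE S T. P (?F p)}"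
    by (simp add: card_image)
  also have "\<dots> = card {p \<in> T a \<times> PiE S T. P ((snd p)(a := fst p))}"
    by (simp add: case_prod_beta)
  also have "\<dots> = (\<Sum>g\<in>PiE S T. card {y \<in> T a. P (g(a := y))})"
    using card_filter_prod[of "T a" "PiE S T" "\<lambda>y g. P (g(a := y))"] assms
    by (simp add: finite_PiE)
  finally show ?thesis .
qed

lemma card_good_step:
  fixes n :: nat
  assumes "finite K"
    and "\<And>x. x \<in> K \<Longrightarrow> card {v \<in> {..<n}. B x v} \<le> 1"
  shows "real n - real (card K) \<le> real (card {v \<in> {..<n}. \<forall>x\<in>K. \<not> B x v})"
proof -
  have "{..<n} \<subseteq> {v \<in> {..<n}. \<forall>x\<in>K. \<not> B x v} \<union> (\<Union>x\<in>K. {v \<in> {..<n}. B x v})"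
    by auto
  then have "n \<le> card ({v \<in> {..<n}. \<forall>x\<in>K. \<not> B x v} \<union> (\<Union>x\<in>K. {v \<in> {..<n}. B x v}))"
    using card_mono[OF _ \<open>{..<n} \<subseteq> _\<close>] assms(1) by simp
  also have "\<dots> \<le> card {v \<in> {..<n}. \<forall>x\<in>K. \<not> B x v} + card (\<Union>x\<in>K. {v \<in> {..<n}. B x v})"
    by (rule card_Un_le)
  also have "card (\<Union>x\<in>K. {v \<in> {..<n}. B x v}) \<le> (\<Sum>x\<in>K. card {v \<in> {..<n}. B x v})"
    by (rule card_UN_le[OF assms(1)])
  also have "\<dots> \<le> (\<Sum>x\<in>K. 1)"
    by (rule sum_mono) (use assms(2) in auto)
  finally show ?thesis by simp
qed

definition Ktop :: "'x set \<Rightarrow> ('x \<Rightarrow> 'i set) \<Rightarrow> ('i \<Rightarrow> nat) \<Rightarrow> 'i \<Rightarrow> 'x set" where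
  "Ktop X D \<rho> i = {x \<in> X. i \<in> D x \<and> (\<forall>j\<in>D x. \<rho> j \<le> \<rho> i)}"

lemma count_good:
  fixes D :: "'x \<Rightarrow> 'i set" and bad :: "'x \<Rightarrow> ('i \<Rightarrow> nat) \<Rightarrow> bool" and \<rho> :: "'i \<Rightarrow> nat"
  assumes "inj_on \<rho> I0" "n > 0"
    and dep: "\<And>x g g'. (\<forall>i\<in>D x. g i = g' i) \<Longrightarrow> bad x g = bad x g'"
    and uniq: "\<And>x i g v1 v2. x \<in> X0 \<Longrightarrow> i \<in> D x \<Longrightarrow> (\<forall>j\<in>D x. \<rho> j \<le> \<rho> i) \<Longrightarrow>
                 bad x (g(i:=v1)) \<Longrightarrow> bad x (g(i:=v2)) \<Longrightarrow> v1 = v2"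
  shows "finite I \<Longrightarrow> I \<subseteq> I0 \<Longrightarrow> finite X \<Longrightarrow> X \<subseteq> X0 \<Longrightarrow> (\<forall>x\<in>X. D x \<subseteq> I \<and> D x \<noteq> {}) \<Longrightarrow>
    real n ^ card I * (\<Prod>i\<in>I. max 0 (1 - real (card (Ktop X D \<rho> i)) / real n))
      \<le> real (card {g \<in> PiE I (\<lambda>_. {..<n}). \<forall>x\<in>X. \<not> bad x g})"
proof (induction "card I" arbitrary: I X)
  case 0
  then have "I = {}" by simp
  then have "X = {}" using 0 by auto
  then show ?case using \<open>I = {}\<close> by simp
next
  case (Suc N)
  then have "I \<noteq> {}" by auto
  obtain i0 where i0: "i0 \<in> I" "\<rho> i0 = Max (\<rho> ` I)"
  proof -
    have "Max (\<rho> ` I) \<in> \<rho> ` I" using Suc.prems(1) \<open>I \<noteq> {}\<close> by (intro Max_in) auto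
    then show ?thesis using that by (auto simp del: Max_in)
  qed
  have i0max: "\<rho> j \<le> \<rho> i0" if "j \<in> I" for j
    using i0 that Suc.prems by simp
  define I' where "I' = I - {i0}"
  define X' where "X' = {x \<in> X. i0 \<notin> D x}"
  define K0 where "K0 = {x \<in> X. i0 \<in> D x}"
  have I_eq: "I = insert i0 I'" and i0I': "i0 \<notin> I'" using i0 by (auto simp: I'_def)
  have finI': "finite I'" using Suc.prems by (simp add: I'_def)
  have cardI': "N = card I'" using Suc.hyps(2) I_eq i0I' finI' by simp
  have K0top: "Ktop X D \<rho> i0 = K0"
    using Suc.prems(5) i0max unfolding Ktop_def K0_def by blast
  have Kother: "Ktop X' D \<rho> i = Ktop X D \<rho> i" if "i \<in> I'" for i
  proof -
    have "i0 \<notin> D x" if "x \<in> X" "i \<in> D x" "\<forall>j\<in>D x. \<rho> j \<le> \<rho> i" for x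
    proof
      assume "i0 \<in> D x"
      then have "\<rho> i0 \<le> \<rho> i" using that by auto
      moreover have "\<rho> i \<le> \<rho> i0" using i0max \<open>i \<in> I'\<close> by (auto simp: I'_def)
      ultimately have "\<rho> i = \<rho> i0" by simp
      moreover have "i \<in> I0" "i0 \<in> I0" using \<open>i \<in> I'\<close> i0(1) Suc.prems(2) by (auto simp: I'_def)
      ultimately have "i = i0" using inj_onD[OF assms(1)] by blast
      then show False using \<open>i \<in> I'\<close> i0I' by simp
    qed
    then show ?thesis by (auto simp: Ktop_def X'_def)
  qed
  have IH: "real n ^ card I' * (\<Prod>i\<in>I'. max 0 (1 - real (card (Ktop X' D \<rho> i)) / real n))
      \<le> real (card {g \<in> PiE I' (\<lambda>_. {..<n}). \<forall>x\<in>X'. \<not> bad x g})"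
  proof (rule Suc.hyps(1)[OF cardI' finI'])
    show "I' \<subseteq> I0" using Suc.prems(2) unfolding I'_def by blast
    show "finite X'" using Suc.prems(3) unfolding X'_def by simp
    show "X' \<subseteq> X0" using Suc.prems(4) unfolding X'_def by blast
    show "\<forall>x\<in>X'. D x \<subseteq> I' \<and> D x \<noteq> {}" using Suc.prems(5) unfolding X'_def I'_def by blast
  qed
  have prodeq: "(\<Prod>i\<in>I'. max 0 (1 - real (card (Ktop X' D \<rho> i)) / real n))
      = (\<Prod>i\<in>I'. max 0 (1 - real (card (Ktop X D \<rho> i)) / real n))"
    using Kother by (intro prod.cong) auto
  define G' where "G' = {g \<in> PiE I' (\<lambda>_. {..<n}). \<forall>x\<in>X'. \<not> bad x g}"
  have finK0: "finite K0" using Suc.prems by (simp add: K0_def)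
  have step: "real n - real (card K0) \<le> real (card {v \<in> {..<n}. \<forall>x\<in>K0. \<not> bad x (g(i0 := v))})" for g
  proof (rule card_good_step[OF finK0])
    fix x assume x: "x \<in> K0"
    then have "x \<in> X0" "i0 \<in> D x" "\<forall>j\<in>D x. \<rho> j \<le> \<rho> i0"
      using Suc.prems(4,5) i0max unfolding K0_def by blast+
    then have "\<forall>a\<in>{v \<in> {..<n}. bad x (g(i0 := v))}. \<forall>b\<in>{v \<in> {..<n}. bad x (g(i0 := v))}. a = b"
      using uniq by blast
    then show "card {v \<in> {..<n}. bad x (g(i0 := v))} \<le> 1"
      using card_le_Suc0_iff_eq[of "{v \<in> {..<n}. bad x (g(i0 := v))}"] by simp
  qed
  have split: "(\<forall>x\<in>X. \<not> bad x (g(i0 := v))) \<longleftrightarrow>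
      (\<forall>x\<in>X'. \<not> bad x g) \<and> (\<forall>x\<in>K0. \<not> bad x (g(i0 := v)))" for g v
  proof -
    have "bad x (g(i0 := v)) = bad x g" if "x \<in> X'" for x
      using that by (intro dep) (auto simp: X'_def)
    then show ?thesis by (auto simp: X'_def K0_def)
  qed
  have "card {g \<in> PiE I (\<lambda>_. {..<n}). \<forall>x\<in>X. \<not> bad x g}
      = (\<Sum>g\<in>PiE I' (\<lambda>_. {..<n}). card {v \<in> {..<n}. \<forall>x\<in>X. \<not> bad x (g(i0 := v))})"
    unfolding I_eq by (rule card_PiE_insert_filter[OF finI' i0I']) simp
  also have "\<dots> \<ge> (\<Sum>g\<in>G'. card {v \<in> {..<n}. \<forall>x\<in>K0. \<not> bad x (g(i0 := v))})"
  proof -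
    have "(\<Sum>g\<in>G'. card {v \<in> {..<n}. \<forall>x\<in>K0. \<not> bad x (g(i0 := v))})
        = (\<Sum>g\<in>G'. card {v \<in> {..<n}. \<forall>x\<in>X. \<not> bad x (g(i0 := v))})"
      using split by (intro sum.cong) (auto simp: G'_def)
    also have "\<dots> \<le> (\<Sum>g\<in>PiE I' (\<lambda>_. {..<n}). card {v \<in> {..<n}. \<forall>x\<in>X. \<not> bad x (g(i0 := v))})"
      by (rule sum_mono2) (auto simp: G'_def finI' finite_PiE)
    finally show ?thesis .
  qed
  finally have A: "real (\<Sum>g\<in>G'. card {v \<in> {..<n}. \<forall>x\<in>K0. \<not> bad x (g(i0 := v))})
      \<le> real (card {g \<in> PiE I (\<lambda>_. {..<n}). \<forall>x\<in>X. \<not> bad x g})" by linarith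
  have B: "real (card G') * max 0 (real n - real (card K0))
      \<le> real (\<Sum>g\<in>G'. card {v \<in> {..<n}. \<forall>x\<in>K0. \<not> bad x (g(i0 := v))})"
  proof -
    have "real (card G') * max 0 (real n - real (card K0)) = (\<Sum>g\<in>G'. max 0 (real n - real (card K0)))"
      by simp
    also have "\<dots> \<le> (\<Sum>g\<in>G'. real (card {v \<in> {..<n}. \<forall>x\<in>K0. \<not> bad x (g(i0 := v))}))"
      using step by (intro sum_mono) auto
    finally show ?thesis by simp
  qed
  have C: "real n ^ card I * (\<Prod>i\<in>I. max 0 (1 - real (card (Ktop X D \<rho> i)) / real n))
      = (real n ^ card I' * (\<Prod>i\<in>I'. max 0 (1 - real (card (Ktop X' D \<rho> i)) / real n)))
        * max 0 (real n - real (card K0))"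
  proof -
    have "max 0 (real n - real (card K0)) = real n * max 0 (1 - real (card K0) / real n)"
      using assms(2) by (simp add: max_def field_simps)
    moreover have "(\<Prod>i\<in>I. max 0 (1 - real (card (Ktop X D \<rho> i)) / real n))
       = max 0 (1 - real (card K0) / real n) * (\<Prod>i\<in>I'. max 0 (1 - real (card (Ktop X D \<rho> i)) / real n))"
      unfolding I_eq using i0I' finI' K0top by (simp add: prod.insert)
    moreover have "card I = Suc (card I')" unfolding I_eq using i0I' finI' by simp
    ultimately show ?thesis
      using prodeq by (simp only: power_Suc mult_ac)
  qed
  have "(real n ^ card I' * (\<Prod>i\<in>I'. max 0 (1 - real (card (Ktop X' D \<rho> i)) / real n)))
        * max 0 (real n - real (card K0)) \<le> real (card G') * max 0 (real n - real (card K0))"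
    using IH unfolding G'_def by (intro mult_right_mono) simp_all
  then show ?case using A B C by linarith
qed

lemma bonf:
  fixes p :: real
  assumes "0 \<le> p" "p \<le> 1"
  shows "(1 - p) ^ k \<le> 1 - real k * p + real k * (real k - 1) / 2 * p^2"
proof (induction k)
  case 0
  then show ?case by simp
next
  case (Suc k)
  let ?C = "real k * (real k - 1) / 2"
  have C0: "?C \<ge> 0" by (cases k) auto
  have "(1 - p) ^ Suc k = (1 - p) * (1 - p) ^ k" by simp
  also have "\<dots> \<le> (1 - p) * (1 - real k * p + ?C * p^2)"
    using Suc assms by (intro mult_left_mono) auto
  also have "\<dots> = 1 - real (Suc k) * p + (?C + real k) * p^2 - ?C * p^3"
    unfolding power2_eq_square power3_eq_cube by (simp add: field_simps)
  also have "\<dots> \<le> 1 - real (Suc k) * p + (?C + real k) * p^2"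
    using C0 assms by simp
  also have "?C + real k = real (Suc k) * (real (Suc k) - 1) / 2"
    by (simp add: field_simps)
  finally show ?case .
qed

lemma factor_bound:
  fixes n :: nat
  assumes "n \<ge> 1"
  shows "(1 - 1 / real n) ^ k - real k * (real k - 1) / (2 * real n ^ 2) \<le> max 0 (1 - real k / real n)"
proof -
  have "(1 - 1 / real n) ^ k \<le> 1 - real k * (1 / real n) + real k * (real k - 1) / 2 * (1 / real n)^2"
    using assms by (intro bonf) auto
  also have "\<dots> = 1 - real k / real n + real k * (real k - 1) / (2 * real n ^ 2)"
    by (simp add: power2_eq_square)
  finally show ?thesis by linarith
qed

lemma prod_approx:
  fixes a b e :: "'i \<Rightarrow> real"
  assumes "finite I"
    and "\<And>i. i \<in> I \<Longrightarrow> 0 \<le> a i \<and> a i \<le> 1 \<and> 0 \<le> b i \<and> b i \<le> 1 \<and> 0 \<le> e i \<and> b i - e i \<le> a i"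
  shows "(\<Prod>i\<in>I. b i) - (\<Sum>i\<in>I. e i) \<le> (\<Prod>i\<in>I. a i)"
  using assms
proof (induction I rule: finite_induct)
  case empty
  then show ?case by simp
next
  case (insert j I)
  let ?A = "\<Prod>i\<in>I. a i" and ?B = "\<Prod>i\<in>I. b i" and ?E = "\<Sum>i\<in>I. e i"
  have IH: "?B - ?E \<le> ?A" using insert by auto
  have A01: "0 \<le> ?A" "?A \<le> 1" using insert.prems by (auto intro: prod_nonneg prod_le_1)
  have B01: "0 \<le> ?B" "?B \<le> 1" using insert.prems by (auto intro: prod_nonneg prod_le_1)
  have E0: "0 \<le> ?E" using insert.prems by (auto intro: sum_nonneg)
  have j: "0 \<le> a j" "a j \<le> 1" "0 \<le> b j" "b j \<le> 1" "0 \<le> e j" "b j - e j \<le> a j"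
    using insert.prems by auto
  have "a j * ?A \<ge> a j * (?B - ?E)" using IH j by (intro mult_left_mono) auto
  moreover have "a j * (?B - ?E) \<ge> a j * ?B - ?E"
  proof -
    have "a j * ?E \<le> ?E" using j E0 by (simp add: mult_left_le_one_le)
    then show ?thesis by (simp add: algebra_simps)
  qed
  moreover have "a j * ?B \<ge> (b j - e j) * ?B" using j B01 by (intro mult_right_mono) auto
  moreover have "(b j - e j) * ?B \<ge> b j * ?B - e j"
  proof -
    have "e j * ?B \<le> e j" using j B01 by (simp add: mult_right_le_one_le)
    then show ?thesis by (simp add: algebra_simps)
  qed
  ultimately have "a j * ?A \<ge> b j * ?B - (e j + ?E)" by linarith
  then show ?case using insert.hyps by simp
qed

lemma prod_max_bound:
  fixes n :: nat and k :: "'i \<Rightarrow> nat"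
  assumes "finite I" "n \<ge> 1"
  shows "(1 - 1 / real n) ^ (\<Sum>i\<in>I. k i) - (\<Sum>i\<in>I. real (k i) * (real (k i) - 1) / (2 * real n ^ 2))
     \<le> (\<Prod>i\<in>I. max 0 (1 - real (k i) / real n))"
proof -
  have "(1 - 1 / real n) ^ (\<Sum>i\<in>I. k i) = (\<Prod>i\<in>I. (1 - 1 / real n) ^ k i)"
    by (rule power_sum)
  moreover have "(\<Prod>i\<in>I. (1 - 1 / real n) ^ k i) - (\<Sum>i\<in>I. real (k i) * (real (k i) - 1) / (2 * real n ^ 2))
     \<le> (\<Prod>i\<in>I. max 0 (1 - real (k i) / real n))"
  proof (rule prod_approx[OF assms(1)])
    fix i assume "i \<in> I"
    have p: "0 \<le> 1 - 1 / real n" "1 - 1 / real n \<le> 1" using assms(2) by auto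
    have "0 \<le> real (k i) * (real (k i) - 1)" by (cases "k i") auto
    then have "0 \<le> real (k i) * (real (k i) - 1) / (2 * real n ^ 2)" by simp
    moreover have "max 0 (1 - real (k i) / real n) \<le> 1" by simp
    moreover have "0 \<le> (1 - 1 / real n) ^ k i" "(1 - 1 / real n) ^ k i \<le> 1"
      using p by (auto intro: power_le_one)
    ultimately show "0 \<le> max 0 (1 - real (k i) / real n) \<and> max 0 (1 - real (k i) / real n) \<le> 1 \<and>
          0 \<le> (1 - 1 / real n) ^ k i \<and> (1 - 1 / real n) ^ k i \<le> 1 \<and>
          0 \<le> real (k i) * (real (k i) - 1) / (2 * real n ^ 2) \<and>
          (1 - 1 / real n) ^ k i - real (k i) * (real (k i) - 1) / (2 * real n ^ 2)
            \<le> max 0 (1 - real (k i) / real n)"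
      using factor_bound[OF assms(2)] by auto
  qed
  ultimately show ?thesis by simp
qed

locale bsetup =
  fixes c \<sigma> :: nat and X :: "(nat \<Rightarrow> nat) set" and q :: "nat \<Rightarrow> nat"
  assumes c1: "c \<ge> 1" and Xk: "X \<subseteq> keys c \<sigma>" and qk: "q \<in> keys c \<sigma>" and qX: "q \<notin> X"
begin

definition "m = card X"
definition "I = {..<c} \<times> {..<\<sigma>}"
definition deg :: "nat \<Rightarrow> nat \<Rightarrow> nat" where "deg j \<alpha> = card {x \<in> X. x j = \<alpha>}"
definition prio :: "nat \<times> nat \<Rightarrow> nat" where
  "prio p = (if snd p = q (fst p) then 0 else Suc m - deg (fst p) (snd p))"
definition "M = Suc (Max (prod_encode ` I))"
definition rho :: "nat \<times> nat \<Rightarrow> nat" where "rho p = prio p * M + prod_encode p"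
definition D :: "(nat \<Rightarrow> nat) \<Rightarrow> (nat \<times> nat) set" where
  "D x = (\<lambda>j. (j, x j)) ` {..<c} \<union> (\<lambda>j. (j, q j)) ` {..<c}"

lemma finI: "finite I" by (simp add: I_def)

lemma fin_keys: "finite (keys c \<sigma>)" by (simp add: keys_def finite_PiE)

lemma finX: "finite X" using Xk fin_keys finite_subset by blast

lemma key_lt: "x \<in> keys c \<sigma> \<Longrightarrow> j < c \<Longrightarrow> x j < \<sigma>"
  by (auto simp: keys_def PiE_iff)

lemma key_out: "x \<in> keys c \<sigma> \<Longrightarrow> \<not> j < c \<Longrightarrow> x j = undefined"
  by (auto simp: keys_def PiE_iff extensional_def)

lemma deg_le: "deg j \<alpha> \<le> m"
  unfolding deg_def m_def using finX by (intro card_mono) auto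

lemma differ: "x \<in> X \<Longrightarrow> \<exists>j<c. x j \<noteq> q j"
proof (rule ccontr)
  assume x: "x \<in> X" and "\<not> (\<exists>j<c. x j \<noteq> q j)"
  then have "x j = q j" for j
    using key_out[of x j] key_out[of q j] Xk qk by (cases "j < c") auto
  then have "x = q" by auto
  then show False using x qX by simp
qed

lemma D_sub: "x \<in> X \<Longrightarrow> D x \<subseteq> I"
proof
  fix p assume x: "x \<in> X" and p: "p \<in> D x"
  have xk: "x \<in> keys c \<sigma>" using x Xk by blast
  from p obtain j where j: "j < c" "p = (j, x j) \<or> p = (j, q j)" unfolding D_def by blast
  have "x j < \<sigma>" "q j < \<sigma>" using key_lt[OF xk j(1)] key_lt[OF qk j(1)] by simp_all
  then show "p \<in> I" using j unfolding I_def by auto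
qed

lemma D_ne: "D x \<noteq> {}"
proof -
  have "(0, x 0) \<in> D x" using c1 unfolding D_def by auto
  then show ?thesis by blast
qed

lemma D_fin: "finite (D x)"
  unfolding D_def by simp

lemma enc_lt: "p \<in> I \<Longrightarrow> prod_encode p < M"
  unfolding M_def using finI by (simp add: le_imp_less_Suc)

lemma rho_inj: "inj_on rho I"
proof (rule inj_onI)
  fix p p' assume p: "p \<in> I" "p' \<in> I" "rho p = rho p'"
  have "rho p mod M = prod_encode p mod M" unfolding rho_def by (rule mod_mult_self3)
  also have "\<dots> = prod_encode p" using enc_lt[OF p(1)] by (rule mod_less)
  finally have a: "rho p mod M = prod_encode p" .
  have "rho p' mod M = prod_encode p' mod M" unfolding rho_def by (rule mod_mult_self3)
  also have "\<dots> = prod_encode p'" using enc_lt[OF p(2)] by (rule mod_less)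
  finally have b: "rho p' mod M = prod_encode p'" .
  have "prod_encode p = prod_encode p'" unfolding a[symmetric] b[symmetric] p(3) by (rule refl)
  then show "p = p'" using inj_onD[OF inj_prod_encode[of UNIV]] by blast
qed

lemma rho_le: "p \<in> I \<Longrightarrow> p' \<in> I \<Longrightarrow> rho p \<le> rho p' \<Longrightarrow> prio p \<le> prio p'"
proof (rule ccontr)
  assume p: "p \<in> I" "p' \<in> I" "rho p \<le> rho p'" "\<not> prio p \<le> prio p'"
  have "rho p' < (prio p' + 1) * M" using enc_lt[OF p(2)] unfolding rho_def by simp
  also have "\<dots> \<le> prio p * M" using p(4) by (intro mult_right_mono) auto
  also have "\<dots> \<le> rho p" unfolding rho_def by simp
  finally show False using p(3) by simp
qed

lemma top_char:
  assumes x: "x \<in> X" and i: "i \<in> D x" and top: "\<forall>j\<in>D x. rho j \<le> rho i"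
  shows "\<exists>j<c. i = (j, x j) \<and> x j \<noteq> q j"
proof -
  obtain j0 where j0: "j0 < c" "x j0 \<noteq> q j0" using differ[OF x] by blast
  have p0: "(j0, x j0) \<in> D x" using j0 unfolding D_def by auto
  have "prio (j0, x j0) \<ge> 1" using j0 deg_le[of j0 "x j0"] unfolding prio_def by simp
  moreover have "prio (j0, x j0) \<le> prio i"
    using rho_le[of "(j0, x j0)" i] p0 i top D_sub[OF x] by blast
  ultimately have "prio i \<noteq> 0" by simp
  then have ne: "snd i \<noteq> q (fst i)" unfolding prio_def by auto
  from i obtain j where "j < c" "i = (j, x j) \<or> i = (j, q j)" unfolding D_def by auto
  then show ?thesis using ne by auto
qed

abbreviation "K i \<equiv> Ktop X D rho i"

lemma K_unique: "x \<in> K i \<Longrightarrow> x \<in> K i' \<Longrightarrow> i \<in> I \<Longrightarrow> i' \<in> I \<Longrightarrow> i = i'"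
proof -
  assume a: "x \<in> K i" "x \<in> K i'" "i \<in> I" "i' \<in> I"
  then have "rho i \<le> rho i'" "rho i' \<le> rho i" unfolding Ktop_def by blast+
  then have "rho i = rho i'" by simp
  then show "i = i'" using inj_onD[OF rho_inj] a(3,4) by blast
qed

lemma K_exists: "x \<in> X \<Longrightarrow> \<exists>i\<in>I. x \<in> K i"
proof -
  assume x: "x \<in> X"
  have "Max (rho ` D x) \<in> rho ` D x" using D_fin D_ne by (intro Max_in) auto
  then obtain i where i: "i \<in> D x" "rho i = Max (rho ` D x)" by (auto simp del: Max_in)
  have "\<forall>j\<in>D x. rho j \<le> rho i" using i D_fin by simp
  then show ?thesis using i x D_sub[OF x] unfolding Ktop_def by blast
qed

lemma sumK: "(\<Sum>i\<in>I. card (K i)) = m"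
proof -
  have "X = (\<Union>i\<in>I. K i)" using K_exists unfolding Ktop_def by blast
  moreover have "card (\<Union>i\<in>I. K i) = (\<Sum>i\<in>I. card (K i))"
  proof (rule card_UN_disjoint[OF finI])
    show "\<forall>i\<in>I. finite (K i)" using finX unfolding Ktop_def by simp
    show "\<forall>i\<in>I. \<forall>j\<in>I. i \<noteq> j \<longrightarrow> K i \<inter> K j = {}" using K_unique by blast
  qed
  ultimately show ?thesis unfolding m_def by simp
qed

end

context bsetup begin

lemma boundK:
  assumes iI: "i \<in> I"
  shows "card (K i) ^ c \<le> (2 * m) ^ (c - 1)"
proof (cases "K i = {}")
  case True
  have "c \<noteq> 0" using c1 by simp
  then show ?thesis using True by (simp add: zero_power)
next
  case False
  then obtain x0 where x0: "x0 \<in> K i" by blast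
  have x0X: "x0 \<in> X" "i \<in> D x0" "\<forall>j'\<in>D x0. rho j' \<le> rho i" using x0 unfolding Ktop_def by blast+
  obtain j where j: "j < c" "i = (j, x0 j)" "x0 j \<noteq> q j" using top_char[OF x0X] by blast
  define \<alpha> where "\<alpha> = x0 j"
  define d where "d = deg j \<alpha>"
  have Kj: "x \<in> X \<and> x j = \<alpha>" if "x \<in> K i" for x
  proof -
    have xx: "x \<in> X" "i \<in> D x" "\<forall>j'\<in>D x. rho j' \<le> rho i" using that unfolding Ktop_def by blast+
    obtain j'' where "i = (j'', x j'')" using top_char[OF xx] by blast
    then show ?thesis using j xx(1) unfolding \<alpha>_def by auto
  qed
  have finK: "finite (K i)" using finX unfolding Ktop_def by simp
  have kd: "card (K i) \<le> d"
  proof -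
    have "K i \<subseteq> {x \<in> X. x j = \<alpha>}" using Kj by blast
    then show ?thesis unfolding d_def deg_def using finX by (intro card_mono) auto
  qed
  have dm: "d \<le> m" unfolding d_def by (rule deg_le)
  have prio_i: "prio i = Suc m - d" using j unfolding prio_def d_def \<alpha>_def by simp
  have degge: "d \<le> deg j' (x j')" if x: "x \<in> K i" and j': "j' < c" "x j' \<noteq> q j'" for x j'
  proof -
    have xx: "x \<in> X" "\<forall>t\<in>D x. rho t \<le> rho i" using x unfolding Ktop_def by blast+
    have inD: "(j', x j') \<in> D x" using j'(1) unfolding D_def by blast
    have "prio (j', x j') \<le> prio i"
    proof (rule rho_le)
      show "(j', x j') \<in> I" using inD D_sub[OF xx(1)] by blast
      show "i \<in> I" by (rule iI)
      show "rho (j', x j') \<le> rho i" using xx(2) inD by blast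
    qed
    then have "Suc m - deg j' (x j') \<le> Suc m - d" using prio_i j'(2) unfolding prio_def by simp
    then show ?thesis using deg_le[of j' "x j'"] dm by linarith
  qed
  define J where "J = {..<c} - {j}"
  define C where "C j' = (\<lambda>x. x j') ` K i" for j'
  have finJ: "finite J" unfolding J_def by simp
  have cardJ: "card J = c - 1" unfolding J_def using j(1) by simp
  have finC: "finite (C j')" for j' unfolding C_def using finK by simp
  have Cb: "card (C j') * d \<le> 2 * m" if "j' \<in> J" for j'
  proof -
    define C' where "C' = C j' - {q j'}"
    define Y where "Y \<beta> = {x \<in> X. x j' = \<beta>}" for \<beta>
    have finC': "finite C'" unfolding C'_def using finC by simp
    have "(\<Sum>\<beta>\<in>C'. card (Y \<beta>)) = card (\<Union>\<beta>\<in>C'. Y \<beta>)"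
    proof (rule card_UN_disjoint[symmetric, OF finC'])
      show "\<forall>\<beta>\<in>C'. finite (Y \<beta>)" unfolding Y_def using finX by simp
      show "\<forall>\<beta>\<in>C'. \<forall>\<gamma>\<in>C'. \<beta> \<noteq> \<gamma> \<longrightarrow> Y \<beta> \<inter> Y \<gamma> = {}" unfolding Y_def by blast
    qed
    also have "\<dots> \<le> m" unfolding m_def Y_def using finX by (intro card_mono) auto
    finally have s: "(\<Sum>\<beta>\<in>C'. card (Y \<beta>)) \<le> m" .
    have "(\<Sum>\<beta>\<in>C'. d) \<le> (\<Sum>\<beta>\<in>C'. card (Y \<beta>))"
    proof (rule sum_mono)
      fix \<beta> assume b: "\<beta> \<in> C'"
      then obtain x where x: "x \<in> K i" "\<beta> = x j'" "\<beta> \<noteq> q j'" unfolding C'_def C_def by blast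
      have "j' < c" using that unfolding J_def by simp
      then have "d \<le> deg j' (x j')" using degge[OF x(1)] x by simp
      then show "d \<le> card (Y \<beta>)" unfolding Y_def deg_def using x(2) by simp
    qed
    then have c'd: "card C' * d \<le> m" using s by simp
    have "C j' \<subseteq> insert (q j') C'" unfolding C'_def by blast
    then have "card (C j') \<le> card (insert (q j') C')" using finC' by (intro card_mono) auto
    also have "\<dots> \<le> Suc (card C')" using finC' by (simp add: card_insert_if)
    finally have "card (C j') \<le> Suc (card C')" .
    then have "card (C j') * d \<le> Suc (card C') * d" by (rule mult_right_mono) simp
    also have "\<dots> = card C' * d + d" by simp
    also have "\<dots> \<le> 2 * m" using c'd dm by linarith
    finally show ?thesis .
  qed
  have kprod: "card (K i) \<le> (\<Prod>j'\<in>J. card (C j'))"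
  proof -
    have inj: "inj_on (\<lambda>x. restrict x J) (K i)"
    proof (rule inj_onI)
      fix x y assume x: "x \<in> K i" and y: "y \<in> K i" and e: "restrict x J = restrict y J"
      have xk: "x \<in> keys c \<sigma>" "y \<in> keys c \<sigma>" using Kj[OF x] Kj[OF y] Xk by blast+
      show "x = y"
      proof
        fix t
        show "x t = y t"
        proof (cases "t \<in> J")
          case True
          then show ?thesis using fun_cong[OF e, of t] by simp
        next
          case False
          show ?thesis
          proof (cases "t = j")
            case True then show ?thesis using Kj[OF x] Kj[OF y] by simp
          next
            case False
            then have "\<not> t < c" using \<open>t \<notin> J\<close> unfolding J_def by simp
            then show ?thesis using key_out[OF xk(1)] key_out[OF xk(2)] by simp
          qed
        qed
      qed
    qed
    have sub: "(\<lambda>x. restrict x J) ` K i \<subseteq> PiE J C"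
      unfolding C_def by auto
    have "card (K i) = card ((\<lambda>x. restrict x J) ` K i)" using card_image[OF inj] by simp
    also have "\<dots> \<le> card (PiE J C)" using sub finJ finC by (intro card_mono) (simp_all add: finite_PiE)
    also have "\<dots> = (\<Prod>j'\<in>J. card (C j'))" using finJ by (rule card_PiE)
    finally show ?thesis .
  qed
  have "card (K i) ^ c = card (K i) ^ (c - 1) * card (K i)"
    using c1 by (metis Suc_diff_1 less_le_trans power_Suc2 zero_less_one)
  also have "\<dots> \<le> d ^ (c - 1) * (\<Prod>j'\<in>J. card (C j'))"
    using kd kprod by (intro mult_mono power_mono) simp_all
  also have "\<dots> = (\<Prod>j'\<in>J. d * card (C j'))"
    using cardJ by (simp add: prod.distrib)
  also have "\<dots> \<le> (\<Prod>j'\<in>J. 2 * m)"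
    using Cb by (intro prod_mono) (simp add: mult.commute)
  also have "\<dots> = (2 * m) ^ (c - 1)" using cardJ by simp
  finally show ?thesis .
qed

end

lemma pow_bound:
  fixes k m c :: nat
  assumes c1: "c \<ge> 1" and kc: "k ^ c \<le> (2 * m) ^ (c - 1)"
  shows "real k * (real k - 1) / 2 \<le> real k * real m powr (1 - 1 / real c)"
proof (cases "k = 0 \<or> c = 1")
  case True
  moreover have "c = 1 \<Longrightarrow> k \<le> 1" using kc by simp
  moreover have "0 \<le> real k * real m powr (1 - 1 / real c)" by simp
  ultimately have "k = 0 \<or> k = 1" "0 \<le> real k * real m powr (1 - 1 / real c)" by auto
  then show ?thesis by auto
next
  case False
  then have k1: "k \<ge> 1" and c2: "c \<ge> 2" using c1 by auto
  have "1 \<le> k ^ c" using k1 by simp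
  then have "(2 * m) ^ (c - 1) \<ge> 1" using kc by linarith
  moreover have "c - 1 \<noteq> 0" using c2 by simp
  ultimately have m1: "m \<ge> 1" by (cases m) (auto simp: zero_power)
  have key: "real k / 2 \<le> real m powr (1 - 1 / real c)"
  proof (rule ccontr)
    assume "\<not> ?thesis"
    then have lt: "real m powr (1 - 1 / real c) < real k / 2" by simp
    have "(real m powr (1 - 1 / real c)) ^ c < (real k / 2) ^ c"
      using lt c1 by (intro power_strict_mono) auto
    moreover have "(real m powr (1 - 1 / real c)) ^ c = real m ^ (c - 1)"
    proof -
      have "(real m powr (1 - 1 / real c)) ^ c = real m powr (real c * (1 - 1 / real c))"
        using m1 by (intro powr_power) simp
      also have "real c * (1 - 1 / real c) = real (c - 1)"
        using c1 by (simp add: field_simps of_nat_diff)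
      also have "real m powr real (c - 1) = real m ^ (c - 1)"
        using m1 by (intro powr_realpow) simp
      finally show ?thesis .
    qed
    moreover have "(real k / 2) ^ c \<le> real m ^ (c - 1) / 2"
    proof -
      have "real (k ^ c) \<le> real ((2 * m) ^ (c - 1))" using kc by (simp only: of_nat_le_iff)
      then have "real k ^ c \<le> 2 ^ (c - 1) * real m ^ (c - 1)" by (simp add: power_mult_distrib)
      moreover have "(2::real) ^ c = 2 * 2 ^ (c - 1)"
        using c1 by (metis Suc_diff_1 less_le_trans power_Suc zero_less_one)
      ultimately show ?thesis by (simp add: power_divide field_simps)
    qed
    moreover have "real m ^ (c - 1) / 2 < real m ^ (c - 1)" using m1 by simp
    ultimately show False by linarith
  qed
  have "real k * (real k - 1) / 2 \<le> real k * (real k / 2)" by (simp add: field_simps)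
  also have "\<dots> \<le> real k * real m powr (1 - 1 / real c)"
    using key by (intro mult_left_mono) auto
  finally show ?thesis .
qed

context bsetup begin

definition psi :: "(nat \<times> nat \<Rightarrow> nat) \<Rightarrow> nat \<Rightarrow> nat \<Rightarrow> nat" where
  "psi g = (\<lambda>j. if j < c then (\<lambda>\<alpha>. if \<alpha> < \<sigma> then g (j, \<alpha>) else undefined) else undefined)"

definition bad :: "(nat \<Rightarrow> nat) \<Rightarrow> (nat \<times> nat \<Rightarrow> nat) \<Rightarrow> bool" where
  "bad x g = (tab_hash c (psi g) x = tab_hash c (psi g) q)"

lemma psi_inj: "inj_on psi (PiE I (\<lambda>_. {..<n}))"
proof (rule inj_onI)
  fix g g' assume g: "g \<in> PiE I (\<lambda>_. {..<n})" "g' \<in> PiE I (\<lambda>_. {..<n})" and e: "psi g = psi g'"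
  show "g = g'"
  proof
    fix p :: "nat \<times> nat"
    obtain j \<alpha> where p: "p = (j, \<alpha>)" by (cases p)
    show "g p = g' p"
    proof (cases "p \<in> I")
      case True
      then have jc: "j < c" "\<alpha> < \<sigma>" using p unfolding I_def by auto
      have "psi g j \<alpha> = psi g' j \<alpha>" using e by (rule arg_cong)
      moreover have "psi g j \<alpha> = g (j, \<alpha>)" "psi g' j \<alpha> = g' (j, \<alpha>)"
        using jc unfolding psi_def by simp_all
      ultimately show ?thesis using p by simp
    next
      case False
      have "g p = undefined" "g' p = undefined"
        using PiE_arb[OF g(1) False] PiE_arb[OF g(2) False] by simp_all
      then show ?thesis by simp
    qed
  qed
qed

lemma psi_image: "psi ` (PiE I (\<lambda>_. {..<2^r})) = tab_tables c \<sigma> r"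
proof
  show "psi ` (PiE I (\<lambda>_. {..<2^r})) \<subseteq> tab_tables c \<sigma> r"
  proof
    fix G assume "G \<in> psi ` (PiE I (\<lambda>_. {..<2^r}))"
    then obtain g where g: "g \<in> PiE I (\<lambda>_. {..<2^r})" "G = psi g" by blast
    have "g (j, \<alpha>) < 2^r" if "j < c" "\<alpha> < \<sigma>" for j \<alpha>
      using g(1) that unfolding I_def PiE_iff by auto
    then show "G \<in> tab_tables c \<sigma> r"
      unfolding g(2) tab_tables_def psi_def PiE_iff extensional_def by auto
  qed
next
  show "tab_tables c \<sigma> r \<subseteq> psi ` (PiE I (\<lambda>_. {..<2^r}))"
  proof
    fix G assume G: "G \<in> tab_tables c \<sigma> r"
    define g where "g p = (if p \<in> I then G (fst p) (snd p) else undefined)" for p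
    have gP: "g \<in> PiE I (\<lambda>_. {..<2^r})"
      using G unfolding g_def I_def tab_tables_def PiE_iff extensional_def by auto
    have "psi g = G"
    proof
      fix j show "psi g j = G j"
      proof (cases "j < c")
        case True
        show ?thesis
        proof
          fix \<alpha> show "psi g j \<alpha> = G j \<alpha>"
            using G True unfolding psi_def g_def I_def tab_tables_def PiE_iff extensional_def by auto
        qed
      next
        case False
        then show ?thesis using G unfolding psi_def tab_tables_def PiE_iff extensional_def by auto
      qed
    qed
    then show "G \<in> psi ` (PiE I (\<lambda>_. {..<2^r}))" using gP by blast
  qed
qed

lemma cardT: "card (tab_tables c \<sigma> r) = (2^r) ^ card I"
proof -
  have "card (tab_tables c \<sigma> r) = card (PiE I (\<lambda>_. {..<(2::nat)^r}))"
    using card_image[OF psi_inj] psi_image by metis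
  also have "\<dots> = (2^r) ^ card I" using finI by (simp add: card_PiE)
  finally show ?thesis .
qed

lemma card_good:
  "card {G \<in> tab_tables c \<sigma> r. \<forall>x\<in>X. tab_hash c G x \<noteq> tab_hash c G q}
   = card {g \<in> PiE I (\<lambda>_. {..<2^r}). \<forall>x\<in>X. \<not> bad x g}"
proof -
  have "{G \<in> tab_tables c \<sigma> r. \<forall>x\<in>X. tab_hash c G x \<noteq> tab_hash c G q}
      = psi ` {g \<in> PiE I (\<lambda>_. {..<2^r}). \<forall>x\<in>X. \<not> bad x g}"
    unfolding psi_image[symmetric] bad_def by (rule filter_image)
  moreover have "inj_on psi {g \<in> PiE I (\<lambda>_. {..<2^r}). \<forall>x\<in>X. \<not> bad x g}"
    by (rule inj_on_subset[OF psi_inj]) blast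
  ultimately show ?thesis by (simp add: card_image)
qed

lemma psi_upd_other: "p \<noteq> (j, \<alpha>) \<Longrightarrow> j < c \<Longrightarrow> \<alpha> < \<sigma> \<Longrightarrow> psi (g(p := v)) j \<alpha> = psi g j \<alpha>"
  unfolding psi_def by auto

lemma dep: "(\<forall>i\<in>D x. g i = g' i) \<Longrightarrow> bad x g = bad x g'"
proof -
  assume a: "\<forall>i\<in>D x. g i = g' i"
  have "tab_hash c (psi g) x = tab_hash c (psi g') x"
  proof (rule tab_hash_cong)
    fix j assume "j < c"
    then have "(j, x j) \<in> D x" unfolding D_def by blast
    then show "psi g j (x j) = psi g' j (x j)" using a unfolding psi_def by auto
  qed
  moreover have "tab_hash c (psi g) q = tab_hash c (psi g') q"
  proof (rule tab_hash_cong)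
    fix j assume "j < c"
    then have "(j, q j) \<in> D x" unfolding D_def by blast
    then show "psi g j (q j) = psi g' j (q j)" using a unfolding psi_def by auto
  qed
  ultimately show ?thesis unfolding bad_def by simp
qed

lemma uniq:
  assumes x: "x \<in> X" and i: "i \<in> D x" and top: "\<forall>j\<in>D x. rho j \<le> rho i"
    and b1: "bad x (g(i := v1))" and b2: "bad x (g(i := v2))"
  shows "v1 = v2"
proof -
  obtain j where j: "j < c" "i = (j, x j)" "x j \<noteq> q j" using top_char[OF x i top] by blast
  have xk: "x \<in> keys c \<sigma>" using x Xk by blast
  have xj: "x j < \<sigma>" using key_lt[OF xk j(1)] .
  let ?G1 = "psi (g(i := v1))" and ?G2 = "psi (g(i := v2))"
  have hq: "tab_hash c ?G1 q = tab_hash c ?G2 q"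
  proof (rule tab_hash_cong)
    fix j' assume j': "j' < c"
    have ne: "i \<noteq> (j', q j')" using j by auto
    have "q j' < \<sigma>" using key_lt[OF qk j'] .
    then show "?G1 j' (q j') = ?G2 j' (q j')"
      using psi_upd_other[OF ne j'] by simp
  qed
  have hx: "xor (tab_hash c ?G1 x) (tab_hash c ?G2 x)
      = (if j < c then xor (?G1 j (x j)) (?G2 j (x j)) else 0)"
  proof (rule tab_hash_diff)
    fix j' assume j': "j' < c" "j' \<noteq> j"
    have ne: "i \<noteq> (j', x j')" using j j' by auto
    have "x j' < \<sigma>" using key_lt[OF xk j'(1)] .
    then show "?G1 j' (x j') = ?G2 j' (x j')"
      using psi_upd_other[OF ne j'(1)] by simp
  qed
  have "?G1 j (x j) = v1" "?G2 j (x j) = v2" using j(1,2) xj unfolding psi_def by simp_all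
  then have "xor (tab_hash c ?G1 x) (tab_hash c ?G2 x) = xor v1 v2" using hx j(1) by simp
  moreover have "tab_hash c ?G1 x = tab_hash c ?G2 x" using b1 b2 hq unfolding bad_def by simp
  ultimately have "xor v1 v2 = 0" by simp
  then show ?thesis by (rule xor_eq0)
qed

lemma good_lower:
  "real (2^r) ^ card I * (\<Prod>i\<in>I. max 0 (1 - real (card (K i)) / real (2^r)))
     \<le> real (card {g \<in> PiE I (\<lambda>_. {..<2^r}). \<forall>x\<in>X. \<not> bad x g})"
proof (rule count_good[where I0 = I and X0 = X])
  show "inj_on rho I" by (rule rho_inj)
  show "(0::nat) < 2 ^ r" by simp
  show "\<And>x g g'. \<forall>i\<in>D x. g i = g' i \<Longrightarrow> bad x g = bad x g'" by (rule dep)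
  show "\<And>x i g v1 v2. x \<in> X \<Longrightarrow> i \<in> D x \<Longrightarrow> \<forall>j\<in>D x. rho j \<le> rho i \<Longrightarrow>
          bad x (g(i := v1)) \<Longrightarrow> bad x (g(i := v2)) \<Longrightarrow> v1 = v2" by (rule uniq)
  show "finite I" by (rule finI)
  show "I \<subseteq> I" by simp
  show "finite X" by (rule finX)
  show "X \<subseteq> X" by simp
  show "\<forall>x\<in>X. D x \<subseteq> I \<and> D x \<noteq> {}" using D_sub D_ne by blast
qed

lemma err_bound:
  "(\<Sum>i\<in>I. real (card (K i)) * (real (card (K i)) - 1) / (2 * real (2^r) ^ 2))
     \<le> real m powr (2 - 1 / real c) / real (2^r) ^ 2"
proof -
  have each: "real (card (K i)) * (real (card (K i)) - 1) / 2 \<le> real (card (K i)) * real m powr (1 - 1 / real c)"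
    if "i \<in> I" for i
    using pow_bound[OF c1 boundK[OF that]] .
  have S: "(\<Sum>i\<in>I. real (card (K i)) * (real (card (K i)) - 1) / 2)
      \<le> (\<Sum>i\<in>I. real (card (K i)) * real m powr (1 - 1 / real c))"
    using each by (rule sum_mono)
  have S2: "(\<Sum>i\<in>I. real (card (K i)) * real m powr (1 - 1 / real c)) = real m * real m powr (1 - 1 / real c)"
  proof -
    have "(\<Sum>i\<in>I. real (card (K i)) * real m powr (1 - 1 / real c))
        = (\<Sum>i\<in>I. real (card (K i))) * real m powr (1 - 1 / real c)"
      by (rule sum_distrib_right[symmetric])
    also have "(\<Sum>i\<in>I. real (card (K i))) = real m"
      using sumK by (metis of_nat_sum)
    finally show ?thesis .
  qed
  have S3: "real m * real m powr (1 - 1 / real c) = real m powr (2 - 1 / real c)"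
  proof (cases "m = 0")
    case True then show ?thesis by simp
  next
    case False
    then have "real m * real m powr (1 - 1 / real c) = real m powr (1 + (1 - 1 / real c))"
      by (intro powr_mult_base) simp
    then show ?thesis by simp
  qed
  have E: "(\<Sum>i\<in>I. real (card (K i)) * (real (card (K i)) - 1) / (2 * real (2^r) ^ 2))
      = (\<Sum>i\<in>I. real (card (K i)) * (real (card (K i)) - 1) / 2) / real (2^r) ^ 2"
    by (simp add: sum_divide_distrib)
  have "(\<Sum>i\<in>I. real (card (K i)) * (real (card (K i)) - 1) / 2) \<le> real m powr (2 - 1 / real c)"
    using S S2 S3 by simp
  then show ?thesis unfolding E by (intro divide_right_mono) simp_all
qed

lemma single_bound:
  "real (card {G \<in> tab_tables c \<sigma> r. \<exists>x\<in>X. tab_hash c G x = tab_hash c G q}) / real (card (tab_tables c \<sigma> r))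
    \<le> (1 - (1 - 1 / real (2^r)) ^ m) + real m powr (2 - 1 / real c) / real (2^r) ^ 2"
proof -
  let ?T = "tab_tables c \<sigma> r"
  let ?n = "(2::nat)^r"
  let ?good = "{G \<in> ?T. \<forall>x\<in>X. tab_hash c G x \<noteq> tab_hash c G q}"
  let ?fail = "{G \<in> ?T. \<exists>x\<in>X. tab_hash c G x = tab_hash c G q}"
  have finT: "finite ?T" unfolding tab_tables_def by (simp add: finite_PiE)
  have Tpos: "real (card ?T) > 0" using cardT by simp
  have split: "?fail = ?T - ?good" by blast
  have "card ?fail = card ?T - card ?good" unfolding split using finT by (intro card_Diff_subset) auto
  moreover have "card ?good \<le> card ?T" using finT by (intro card_mono) auto
  ultimately have fail_eq: "real (card ?fail) = real (card ?T) - real (card ?good)" by simp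
  have n1: "?n \<ge> 1" by simp
  have "(1 - 1 / real ?n) ^ m - real m powr (2 - 1 / real c) / real ?n ^ 2
      \<le> (1 - 1 / real ?n) ^ (\<Sum>i\<in>I. card (K i)) - (\<Sum>i\<in>I. real (card (K i)) * (real (card (K i)) - 1) / (2 * real ?n ^ 2))"
    using err_bound sumK by simp
  also have "\<dots> \<le> (\<Prod>i\<in>I. max 0 (1 - real (card (K i)) / real ?n))"
    by (rule prod_max_bound[OF finI n1])
  also have "\<dots> = real ?n ^ card I * (\<Prod>i\<in>I. max 0 (1 - real (card (K i)) / real ?n)) / real (card ?T)"
    using cardT by simp
  also have "\<dots> \<le> real (card ?good) / real (card ?T)"
    using good_lower card_good Tpos by (intro divide_right_mono) simp_all
  finally have g: "(1 - 1 / real ?n) ^ m - real m powr (2 - 1 / real c) / real ?n ^ 2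
      \<le> real (card ?good) / real (card ?T)" .
  have "real (card ?fail) / real (card ?T) = 1 - real (card ?good) / real (card ?T)"
    using fail_eq Tpos by (simp add: field_simps)
  then show ?thesis using g by simp
qed

end

theorem corollary2:
  fixes c \<sigma> r k :: nat and X :: "(nat \<Rightarrow> nat) set" and q :: "nat \<Rightarrow> nat"
  assumes "c \<ge> 1"
    and "X \<subseteq> keys c \<sigma>"
    and "q \<in> keys c \<sigma> - X"
  shows "measure_pmf.prob (tab_family k c \<sigma> r) {G. bloom_query k c G X q}
    \<le> ((1 - (1 - 1 / real (2^r)) ^ card X)
        + 2 * real (card X) powr (2 - 1 / real c) / (real (2^r))^2) ^ k"
proof -
  interpret bsetup c \<sigma> X q using assms by unfold_locales auto
  let ?T = "tab_tables c \<sigma> r"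
  let ?B = "{g. \<exists>x\<in>X. tab_hash c g x = tab_hash c g q}"
  let ?S = "PiE {..<k} (\<lambda>_. ?T)"
  have finT: "finite ?T" unfolding tab_tables_def by (simp add: finite_PiE)
  have cT: "card ?T > 0" using cardT by simp
  then have Tne: "?T \<noteq> {}" by auto
  have finS: "finite ?S" using finT by (simp add: finite_PiE)
  have Sne: "?S \<noteq> {}" using Tne by (simp add: PiE_eq_empty_iff)
  have eq: "?S \<inter> {G. bloom_query k c G X q} = PiE {..<k} (\<lambda>_. ?T \<inter> ?B)"
    unfolding bloom_query_def bloom_array_def by (auto simp: PiE_iff)
  have "measure_pmf.prob (tab_family k c \<sigma> r) {G. bloom_query k c G X q}
      = real (card (?S \<inter> {G. bloom_query k c G X q})) / real (card ?S)"
    unfolding tab_family_def using measure_pmf_of_set[OF Sne finS] by simp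
  also have "\<dots> = real (card (?T \<inter> ?B)) ^ k / real (card ?T) ^ k"
    unfolding eq by (simp add: card_PiE)
  also have "\<dots> = (real (card (?T \<inter> ?B)) / real (card ?T)) ^ k"
    by (simp add: power_divide)
  also have "\<dots> \<le> ((1 - (1 - 1 / real (2^r)) ^ card X)
        + 2 * real (card X) powr (2 - 1 / real c) / (real (2^r))^2) ^ k"
  proof (rule power_mono)
    have TB: "?T \<inter> ?B = {G \<in> ?T. \<exists>x\<in>X. tab_hash c G x = tab_hash c G q}" by blast
    have "real (card (?T \<inter> ?B)) / real (card ?T)
        \<le> (1 - (1 - 1 / real (2^r)) ^ m) + real m powr (2 - 1 / real c) / real (2^r) ^ 2"
      unfolding TB by (rule single_bound)
    also have "\<dots> \<le> (1 - (1 - 1 / real (2^r)) ^ card X)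
        + 2 * real (card X) powr (2 - 1 / real c) / (real (2^r))^2"
      unfolding m_def by (simp add: divide_right_mono)
    finally show "real (card (?T \<inter> ?B)) / real (card ?T) \<le> (1 - (1 - 1 / real (2^r)) ^ card X)
        + 2 * real (card X) powr (2 - 1 / real c) / (real (2^r))^2" .
    show "0 \<le> real (card (?T \<inter> ?B)) / real (card ?T)" by simp
  qed
  finally show ?thesis .
qed

end
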